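(* Let $(U,d)$ be an asymmetric pseudometric space, $k\ge 2$ an integer, $R>0$, and let $U'$ be the output of Cluster$(U,d,R)$. Let $G$ be the digraph on vertex set $U'$ with an arc $ij$ ($i\ne j$) iff $d(i,j)<\frac{R}{2k}$. Then every directed cycle in $G$ has at least $2k+2$ distinct vertices.
   Context: An asymmetric pseudometric space $(U,d)$ is a finite set $U$ with $d:U\times U\to\mathbb{R}_{\ge 0}$ such that $d(u,u)=0$ and $d(u,v)\le d(u,w)+d(w,v)$ for all $u,v,w\in U$ ($d$ need not be symmetric). $d_{\max}(u,v)=\max\{d(u,v),d(v,u)\}$. Cluster$(U,d,R)$: initially all points are unmarked; while an unmarked point exists, choose any unmarked point $c$, let $A=\{v\in U\text{ unmarked}: d_{\max}(c,v)<R\}$, mark all points of $A$, and add $c$ to the output set $U'$. It returns $U'$. *)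

theory Defs
  imports Complex_Main
begin

definition asym_pseudometric :: "'a set \<Rightarrow> ('a \<Rightarrow> 'a \<Rightarrow> real) \<Rightarrow> bool" where
  "asym_pseudometric U d \<longleftrightarrow> finite U \<and>
     (\<forall>u\<in>U. \<forall>v\<in>U. d u v \<ge> 0) \<and>
     (\<forall>u\<in>U. d u u = 0) \<and>
     (\<forall>u\<in>U. \<forall>v\<in>U. \<forall>w\<in>U. d u v \<le> d u w + d w v)"

definition dmax :: "('a \<Rightarrow> 'a \<Rightarrow> real) \<Rightarrow> 'a \<Rightarrow> 'a \<Rightarrow> real" where
  "dmax d u v = max (d u v) (d v u)"

text \<open>Reachable states (unmarked points, output set so far) of the nondeterministic
  procedure Cluster(U,d,R).\<close>
inductive cluster_state :: "'a set \<Rightarrow> ('a \<Rightarrow> 'a \<Rightarrow> real) \<Rightarrow> real \<Rightarrow> 'a set \<Rightarrow> 'a set \<Rightarrow> bool"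
  for U d R where
  init: "cluster_state U d R U {}"
| step: "cluster_state U d R M Out \<Longrightarrow> c \<in> M \<Longrightarrow>
         cluster_state U d R (M - {v \<in> M. dmax d c v < R}) (insert c Out)"

text \<open>U' is a possible output of Cluster(U,d,R): the loop terminates when no unmarked
  point remains.\<close>
definition cluster_output :: "'a set \<Rightarrow> ('a \<Rightarrow> 'a \<Rightarrow> real) \<Rightarrow> real \<Rightarrow> 'a set \<Rightarrow> bool" where
  "cluster_output U d R U' \<longleftrightarrow> cluster_state U d R {} U'"

definition dir_cycle :: "'a set \<Rightarrow> ('a \<Rightarrow> 'a \<Rightarrow> bool) \<Rightarrow> 'a list \<Rightarrow> bool" where
  "dir_cycle V E vs \<longleftrightarrow> vs \<noteq> [] \<and> distinct vs \<and> set vs \<subseteq> V \<and>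
     (\<forall>i < length vs. E (vs ! i) (vs ! ((i + 1) mod length vs)))"

end

theory Submission
  imports Defs
begin

lemma cluster_inv:
  assumes "cluster_state U d R M Out" "asym_pseudometric U d" "R > 0"
  shows "M \<subseteq> U \<and> Out \<subseteq> U \<and> Out \<inter> M = {} \<and> (\<forall>c\<in>Out. \<forall>v\<in>M. dmax d c v \<ge> R)
     \<and> (\<forall>a\<in>Out. \<forall>b\<in>Out. a \<noteq> b \<longrightarrow> dmax d a b \<ge> R)"
  using assms(1)
proof (induction rule: cluster_state.induct)
  case init
  then show ?case by auto
next
  case (step M Out c)
  have cU: "c \<in> U" using step by auto
  have "d c c = 0" using assms(2) cU unfolding asym_pseudometric_def by auto
  hence cc: "dmax d c c < R" using assms(3) unfolding dmax_def by auto
  have sym: "\<And>a b. dmax d a b = dmax d b a" unfolding dmax_def by auto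
  show ?case
  proof (intro conjI)
    show "M - {v \<in> M. dmax d c v < R} \<subseteq> U" using step by auto
    show "insert c Out \<subseteq> U" using step by auto
    show "insert c Out \<inter> (M - {v \<in> M. dmax d c v < R}) = {}" using step cc by auto
    show "\<forall>x\<in>insert c Out. \<forall>v\<in>M - {v \<in> M. dmax d c v < R}. R \<le> dmax d x v"
      using step by auto
    show "\<forall>a\<in>insert c Out. \<forall>b\<in>insert c Out. a \<noteq> b \<longrightarrow> R \<le> dmax d a b"
      using step sym by (metis insert_iff)
  qed
qed

theorem lemma5p4:
  fixes U U' :: "'a set" and d :: "'a \<Rightarrow> 'a \<Rightarrow> real" and k :: nat and R :: real
  assumes "asym_pseudometric U d"
    and "k \<ge> 2"
    and "R > 0"
    and "cluster_output U d R U'"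
  shows "\<forall>vs. dir_cycle U' (\<lambda>i j. i \<noteq> j \<and> d i j < R / (2 * real k)) vs
               \<longrightarrow> length vs \<ge> 2 * k + 2"
proof (intro allI impI)
  fix vs
  assume cyc: "dir_cycle U' (\<lambda>i j. i \<noteq> j \<and> d i j < R / (2 * real k)) vs"
  define e where "e = R / (2 * real k)"
  define L where "L = length vs"
  have inv: "U' \<subseteq> U \<and> (\<forall>a\<in>U'. \<forall>b\<in>U'. a \<noteq> b \<longrightarrow> dmax d a b \<ge> R)"
    using cluster_inv[OF assms(4)[unfolded cluster_output_def] assms(1) assms(3)] by auto
  have tri: "\<And>u v w. u \<in> U \<Longrightarrow> v \<in> U \<Longrightarrow> w \<in> U \<Longrightarrow> d u v \<le> d u w + d w v"
    using assms(1) unfolding asym_pseudometric_def by auto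
  have dist: "distinct vs" and sub: "set vs \<subseteq> U'" and ne: "vs \<noteq> []"
    and arc: "\<And>i. i < L \<Longrightarrow> vs ! i \<noteq> vs ! ((i+1) mod L) \<and> d (vs ! i) (vs ! ((i+1) mod L)) < e"
    using cyc unfolding dir_cycle_def e_def L_def by auto
  have inU: "\<And>i. i < L \<Longrightarrow> vs ! i \<in> U" using sub inv L_def nth_mem by blast
  have L2: "L \<ge> 2"
  proof (rule ccontr)
    assume "\<not> L \<ge> 2"
    moreover have "L \<noteq> 0" using ne L_def by simp
    ultimately have "L = 1" by linarith
    thus False using arc[of 0] by auto
  qed
  show "length vs \<ge> 2 * k + 2"
  proof (rule ccontr)
    assume "\<not> length vs \<ge> 2 * k + 2"
    hence Lk: "L \<le> 2 * k + 1" using L_def by auto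
    have chain: "\<And>m. 1 \<le> m \<Longrightarrow> m < L \<Longrightarrow> d (vs ! 1) (vs ! m) \<le> real (m - 1) * e"
    proof -
      fix m assume "1 \<le> m" "m < L"
      then show "d (vs ! 1) (vs ! m) \<le> real (m - 1) * e"
      proof (induction m)
        case 0 then show ?case by simp
      next
        case (Suc n)
        show ?case
        proof (cases "n = 0")
          case True
          have "d (vs!1) (vs!1) = 0" using assms(1) inU[of 1] L2
            unfolding asym_pseudometric_def by auto
          then show ?thesis using True by simp
        next
          case False
          have IH: "d (vs ! 1) (vs ! n) \<le> real (n - 1) * e" using Suc False by auto
          have a: "d (vs ! n) (vs ! Suc n) < e" using arc[of n] Suc by auto
          have "d (vs ! 1) (vs ! Suc n) \<le> d (vs ! 1) (vs ! n) + d (vs ! n) (vs ! Suc n)"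
            using tri inU Suc L2 by auto
          also have "\<dots> \<le> real (n - 1) * e + e" using IH a by auto
          also have "\<dots> = real (Suc n - 1) * e" using False by (simp add: algebra_simps of_nat_diff)
          finally show ?thesis .
        qed
      qed
    qed
    have c1: "d (vs ! 1) (vs ! (L - 1)) \<le> real (L - 2) * e"
      using chain[of "L - 1"] L2 by (simp add: numeral_2_eq_2)
    have c2: "d (vs ! (L - 1)) (vs ! 0) < e" using arc[of "L - 1"] L2
      by (simp add: Suc_diff_le)
    have "d (vs ! 1) (vs ! 0) \<le> d (vs ! 1) (vs ! (L - 1)) + d (vs ! (L - 1)) (vs ! 0)"
      using tri inU L2 by auto
    hence "d (vs ! 1) (vs ! 0) < real (L - 2) * e + e" using c1 c2 by auto
    also have "\<dots> = real (L - 1) * e" using L2 by (simp add: algebra_simps of_nat_diff)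
    also have "\<dots> \<le> real (2 * k) * e"
      using Lk assms(2,3) by (intro mult_right_mono) (auto simp: e_def)
    also have "\<dots> = R" using assms(2) by (simp add: e_def)
    finally have b: "d (vs ! 1) (vs ! 0) < R" .
    have a: "d (vs ! 0) (vs ! 1) < R"
    proof -
      have "d (vs ! 0) (vs ! 1) < e" using arc[of 0] L2 by auto
      also have "e \<le> R" using assms(2,3) by (simp add: e_def field_simps)
      finally show ?thesis .
    qed
    have "vs ! 0 \<noteq> vs ! 1" proof
      have "0 < length vs" "1 < length vs" using L2 L_def by auto
      thus "vs ! 0 = vs ! 1 \<Longrightarrow> False" using dist nth_eq_iff_index_eq by (metis zero_neq_one)
    qed
    moreover have "vs ! 0 \<in> U'" "vs ! 1 \<in> U'" using ne sub L2 L_def nth_mem[of 0 vs] nth_mem[of 1 vs] by (auto simp del: nth_mem)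
    ultimately have "dmax d (vs ! 0) (vs ! 1) \<ge> R" using inv by auto
    thus False using a b unfolding dmax_def by auto
  qed
qed

end
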